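(* Let $0<\alpha<1$ and fix $t>0$ with $\Lambda(t)=\sum_{j=1}^k\Lambda_j(t)>0$. Let $\tilde N$ have $P(\tilde N=n)=(\Lambda(t))^{n\alpha}E^{n+1}_{\alpha,n\alpha+1}(-(\Lambda(t))^\alpha)$, $n\ge0$, let $X_1,X_2,\dots$ be i.i.d., independent of $\tilde N$, with $P(X_i=j)=\Lambda_j(t)/\Lambda(t)$, $j=1,\dots,k$, and let $\widetilde{\mathcal{M}}=\sum_{i=1}^{\tilde N}X_i$. Then $$\mathbb{E}[\widetilde{\mathcal{M}}]=\frac{(\Lambda(t))^\alpha}{\Gamma(\alpha+1)}\cdot\frac{1}{\Lambda(t)}\sum_{j=1}^kj\Lambda_j(t),$$ $$\mathbb{V}[\widetilde{\mathcal{M}}]=\frac{(\Lambda(t))^\alpha}{\Gamma(\alpha+1)}\left[\frac{1}{\Lambda(t)}\sum_{j=1}^kj^2\Lambda_j(t)+\Big(\frac{1}{\Lambda(t)}\sum_{j=1}^kj\Lambda_j(t)\Big)^2\frac{(\Lambda(t))^\alpha}{\Gamma(\alpha+1)}\Big\{\frac{\alpha B(\alpha,1/2)}{2^{2\alpha-1}}-1\Big\}\right],$$ where $B$ is the beta function, and $\mathbb{V}[\widetilde{\mathcal{M}}]>\mathbb{E}[\widetilde{\mathcal{M}}]$ (over-dispersion).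
   Context: Fix $k\in\mathbb{N}$; $\Lambda_j(t)=\int_0^t\lambda_j$ for locally integrable $\lambda_j:[0,\infty)\to[0,\infty)$. The three-parameter Mittag-Leffler function is $E^{\delta}_{\alpha,\beta}(z)=\sum_{m=0}^\infty\frac{(\delta)_m z^m}{m!\,\Gamma(\alpha m+\beta)}$, where $(\delta)_m=\delta(\delta+1)\cdots(\delta+m-1)$. *)

theory Defs
  imports "HOL-Probability.Probability"
begin

definition mittag_leffler3 :: "real \<Rightarrow> real \<Rightarrow> real \<Rightarrow> real \<Rightarrow> real" where
  "mittag_leffler3 \<delta> \<alpha> \<beta> z =
     (\<Sum>m. pochhammer \<delta> m * z ^ m / (fact m * Gamma (\<alpha> * real m + \<beta>)))"

definition Lam :: "(real \<Rightarrow> real) \<Rightarrow> real \<Rightarrow> real" where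
  "Lam lam t = (LBINT s=0..t. lam s)"

end

theory Submission
  imports Defs
begin


lemma Gamma_ratio_lower:
  fixes a y :: real
  assumes a: "0 < a" "a < 1" and y: "y + a - 1 > 0"
  shows "(y + a - 1) powr a * Gamma y \<le> Gamma (y + a)"
proof -
  have yp: "y > 0" using a y by linarith
  have c: "convex_on {0<..} (ln \<circ> Gamma :: real \<Rightarrow> real)" by (rule log_convex_Gamma_real)
  have "(ln \<circ> Gamma) ((1 - (1 - a)) *\<^sub>R (y + a - 1) + (1 - a) *\<^sub>R (y + a)) \<le> (1 - (1 - a)) * (ln \<circ> Gamma) (y + a - 1) + (1 - a) * (ln \<circ> Gamma) (y + a)"
    using a y by (intro convex_onD[OF c]) auto
  hence "(ln \<circ> Gamma) (a * (y + a - 1) + (1 - a) * (y + a)) \<le> a * (ln \<circ> Gamma) (y + a - 1) + (1 - a) * (ln \<circ> Gamma) (y + a)" by simp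
  moreover have "a * (y + a - 1) + (1 - a) * (y + a) = y" by (simp add: algebra_simps)
  moreover have G1: "Gamma (y + a) = (y + a - 1) * Gamma (y + a - 1)"
    using Gamma_plus1[of "y + a - 1"] y by (simp add: nonpos_Ints_def)
  moreover have gp1: "Gamma (y + a - 1) > 0" using y by (intro Gamma_real_pos) 
  ultimately have "ln (Gamma y) \<le> a * ln (Gamma (y + a - 1)) + (1 - a) * (ln (y + a - 1) + ln (Gamma (y + a - 1)))"
    using y by (simp add: ln_mult)
  hence "ln (Gamma y) \<le> ln (Gamma (y + a - 1)) + (1 - a) * ln (y + a - 1)" by (simp add: algebra_simps)
  hence "Gamma y \<le> exp (ln (Gamma (y + a - 1)) + (1 - a) * ln (y + a - 1))"
    using Gamma_real_pos[OF yp] by (metis exp_le_cancel_iff exp_ln)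
  also have "\<dots> = Gamma (y + a - 1) * (y + a - 1) powr (1 - a)"
    using gp1 y by (simp add: exp_add powr_def)
  finally have "Gamma y \<le> Gamma (y + a - 1) * (y + a - 1) powr (1 - a)" .
  hence "(y + a - 1) powr a * Gamma y \<le> (y + a - 1) powr a * (Gamma (y + a - 1) * (y + a - 1) powr (1 - a))"
    by (intro mult_left_mono) auto
  also have "\<dots> = Gamma (y + a - 1) * ((y + a - 1) powr a * (y + a - 1) powr (1 - a))" by simp
  also have "(y + a - 1) powr a * (y + a - 1) powr (1 - a) = y + a - 1"
    using y by (simp add: powr_add[symmetric])
  finally show ?thesis using G1 by (simp add: mult.commute)
qed




lemma summable_pow_Gamma:
  fixes a c :: real
  assumes a: "0 < a" "a < 1" and c: "c \<ge> 0"
  shows "summable (\<lambda>p. c ^ p / Gamma (a * real p + 1))"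
proof (rule summable_ratio_test[where c = "1/2"])
  let ?N = "nat \<lceil>(2 * c + 1) powr (1 / a) / a\<rceil>"
  show "(1/2::real) < 1" by simp
  show "norm (c ^ Suc n / Gamma (a * real (Suc n) + 1)) \<le> 1/2 * norm (c ^ n / Gamma (a * real n + 1))"
    if n: "?N \<le> n" for n
  proof -
    have g0: "Gamma (a * real n + 1) > 0" using a by (intro Gamma_real_pos) (simp add: add_nonneg_pos)
    have "(2 * c + 1) powr (1 / a) / a \<le> real ?N" by linarith
    also have "\<dots> \<le> real n + 1" using n by linarith
    finally have "(2 * c + 1) powr (1 / a) \<le> a * (real n + 1)" using a by (simp add: field_simps)
    hence "((2 * c + 1) powr (1 / a)) powr a \<le> (a * (real n + 1)) powr a"
      using a by (intro powr_mono2) auto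
    also have "((2 * c + 1) powr (1 / a)) powr a = 2 * c + 1" using a c by (simp add: powr_powr)
    finally have big: "2 * c + 1 \<le> (a * (real n + 1)) powr a" .
    have "(a * real n + 1 + a - 1) powr a * Gamma (a * real n + 1) \<le> Gamma (a * real n + 1 + a)"
      using a by (intro Gamma_ratio_lower) (auto simp: add_nonneg_pos)
    moreover have "a * real n + 1 + a - 1 = a * (real n + 1)" by (simp add: algebra_simps)
    moreover have "a * real (Suc n) + 1 = a * real n + 1 + a" by (simp add: algebra_simps)
    ultimately have G0: "(a * (real n + 1)) powr a * Gamma (a * real n + 1) \<le> Gamma (a * real (Suc n) + 1)"
      by (metis (no_types))
    have G1: "(2 * c + 1) * Gamma (a * real n + 1) \<le> (a * (real n + 1)) powr a * Gamma (a * real n + 1)"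
      using big g0 by (intro mult_right_mono) auto
    have G: "(2 * c + 1) * Gamma (a * real n + 1) \<le> Gamma (a * real (Suc n) + 1)"
      using G0 G1 by linarith
    have gs: "Gamma (a * real (Suc n) + 1) > 0" using a by (intro Gamma_real_pos) (simp add: add_nonneg_pos)
    have "c ^ Suc n / Gamma (a * real (Suc n) + 1) \<le> c ^ Suc n / ((2 * c + 1) * Gamma (a * real n + 1))"
      using G g0 c gs by (intro divide_left_mono) (simp_all add: add_nonneg_pos)
    also have "\<dots> \<le> 1/2 * (c ^ n / Gamma (a * real n + 1))"
    proof -
      have "c ^ Suc n / ((2 * c + 1) * Gamma (a * real n + 1)) = (c / (2 * c + 1)) * (c ^ n / Gamma (a * real n + 1))"
        by (simp add: field_simps)
      also have "\<dots> \<le> 1/2 * (c ^ n / Gamma (a * real n + 1))"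
        using c g0 by (intro mult_right_mono) (auto simp: divide_simps)
      finally show ?thesis .
    qed
    finally show "norm (c ^ Suc n / Gamma (a * real (Suc n) + 1)) \<le> 1/2 * norm (c ^ n / Gamma (a * real n + 1))"
      using g0 gs c by (simp add: abs_of_nonneg)
  qed
qed




lemma poch_choose:
  "pochhammer (real n + 1) m / fact m = real ((n + m) choose n)"
proof -
  have P: "pochhammer (real n + 1) m = fact (n + m) / fact n"
  proof (induction m)
    case 0 then show ?case by simp
  next
    case (Suc m)
    have "pochhammer (real n + 1) (Suc m) = fact (n + m) / fact n * (real n + 1 + real m)"
      by (simp add: pochhammer_Suc Suc)
    also have "\<dots> = fact (Suc (n + m)) / fact n" by (simp add: field_simps)
    finally show ?case by simp
  qed
  show ?thesis using P by (simp add: binomial_fact field_simps)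
qed

lemma alt_choose_sum:
  "(\<Sum>n\<le>p. real (p choose n) * real (n choose r) * (-1) ^ (p - n)) = (if p = r then 1 else 0)"
proof (cases "r \<le> p")
  case False
  then show ?thesis by (intro trans[OF sum.neutral]) auto
next
  case True
  have "(\<Sum>n\<le>p. real (p choose n) * real (n choose r) * (-1) ^ (p - n))
      = (\<Sum>n\<in>{r..p}. real (p choose n) * real (n choose r) * (-1) ^ (p - n))"
    by (intro sum.mono_neutral_right) auto
  also have "\<dots> = (\<Sum>n\<in>{r..p}. real (p choose r) * (real ((p - r) choose (n - r)) * (-1) ^ ((p - r) - (n - r))))"
  proof (intro sum.cong refl)
    fix n assume n: "n \<in> {r..p}"
    have "(p choose n) * (n choose r) = (p choose r) * ((p - r) choose (n - r))"
      using n by (intro choose_mult) auto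
    hence "real (p choose n) * real (n choose r) = real (p choose r) * real ((p - r) choose (n - r))"
      by (metis of_nat_mult)
    moreover have "p - n = (p - r) - (n - r)" using n by auto
    ultimately show "real (p choose n) * real (n choose r) * (-1) ^ (p - n) = real (p choose r) * (real ((p - r) choose (n - r)) * (-1) ^ ((p - r) - (n - r)))"
      by simp
  qed
  also have "\<dots> = real (p choose r) * (\<Sum>n\<in>{r..p}. real ((p - r) choose (n - r)) * (-1) ^ ((p - r) - (n - r)))"
    by (simp add: sum_distrib_left)
  also have "(\<Sum>n\<in>{r..p}. real ((p - r) choose (n - r)) * (-1) ^ ((p - r) - (n - r))) = (\<Sum>i\<le>p - r. real ((p - r) choose i) * (-1) ^ ((p - r) - i))"
    by (rule sum.reindex_bij_witness[where i = "\<lambda>i. i + r" and j = "\<lambda>n. n - r"]) (use True in auto)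
  also have "\<dots> = (1 + (-1::real)) ^ (p - r)"
    by (subst binomial_ring) simp
  finally show ?thesis using True by auto
qed




lemma ml_moment:
  fixes a x :: real and p :: "nat \<Rightarrow> real" and r :: nat
  assumes a: "0 < a" "a < 1" and x: "x > 0"
    and pdef: "\<And>n. p n = x ^ n * (\<Sum>m. pochhammer (real n + 1) m * (- x) ^ m /
                   (fact m * Gamma (a * real m + (real n * a + 1))))"
  shows "(\<lambda>n. real (n choose r) * p n) sums (x ^ r / Gamma (a * real r + 1))"
proof -
  define G where "G q = Gamma (a * real q + 1)" for q :: nat
  have Gpos: "G q > 0" for q unfolding G_def using a by (intro Gamma_real_pos) (simp add: add_nonneg_pos)
  define T where "T z = (case z of (q, n) \<Rightarrow> real (q choose n) * real (n choose r) * (-1) ^ (q - n) * x ^ q / G q)" for z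
  define D1 where "D1 = Sigma (UNIV :: nat set) (\<lambda>q. {..q})"
  define D2 where "D2 = Sigma (UNIV :: nat set) (\<lambda>n. {n..})"
  have sumG: "summable (\<lambda>q. (4 * x) ^ q / G q)"
    unfolding G_def using summable_pow_Gamma[OF a, of "4 * x"] x by simp
  define g where "g q = (\<Sum>n\<le>q. norm (T (q, n)))" for q
  have g_le: "g q \<le> (4 * x) ^ q / G q" for q
  proof -
    have nT: "norm (T (q, n)) = real (q choose n) * real (n choose r) * (x ^ q / G q)" for n
      unfolding T_def using x Gpos[of q] by (simp add: abs_mult power_abs)
    have eq: "g q = (\<Sum>n\<le>q. real (q choose n) * real (n choose r)) * (x ^ q / G q)"
      unfolding g_def nT by (simp add: sum_distrib_right sum_divide_distrib)
    have "(\<Sum>n\<le>q. real (q choose n) * real (n choose r)) \<le> (\<Sum>n\<le>q. real (q choose n) * 2 ^ q)"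
    proof (intro sum_mono mult_left_mono)
      fix n assume "n \<in> {..q}"
      have "n choose r \<le> 2 ^ n" by (rule binomial_le_pow2)
      also have "(2::nat) ^ n \<le> 2 ^ q" using \<open>n \<in> {..q}\<close> by (intro power_increasing) auto
      finally show "real (n choose r) \<le> 2 ^ q" by (metis of_nat_le_iff of_nat_numeral of_nat_power)
    qed simp
    also have "(\<Sum>n\<le>q. real (q choose n) * 2 ^ q) = 4 ^ q"
    proof -
      have "(\<Sum>n\<le>q. real (q choose n) * 2 ^ q) = real (\<Sum>n\<le>q. q choose n) * 2 ^ q"
        by (simp add: sum_distrib_right)
      also have "\<dots> = 2 ^ q * 2 ^ q" by (simp add: choose_row_sum)
      also have "\<dots> = 4 ^ q" by (simp add: power_mult_distrib[symmetric])
      finally show ?thesis .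
    qed
    finally have "(\<Sum>n\<le>q. real (q choose n) * real (n choose r)) \<le> 4 ^ q" .
    hence "g q \<le> 4 ^ q * (x ^ q / G q)" unfolding eq using x Gpos[of q]
      by (intro mult_right_mono) auto
    thus ?thesis by (simp add: power_mult_distrib)
  qed
  have g_nonneg: "g q \<ge> 0" for q unfolding g_def by (simp add: sum_nonneg)
  have "summable g"
    by (rule summable_comparison_test[OF _ sumG]) (use g_le g_nonneg in auto)
  hence "g summable_on UNIV" using g_nonneg by (simp add: summable_on_UNIV_nonneg_real_iff)
  have "(\<lambda>z. norm (T z)) summable_on D1"
    unfolding D1_def
    by (rule summable_on_SigmaI[where g = g]) (auto simp: g_def \<open>g summable_on UNIV\<close>)
  hence T1: "T summable_on D1" by (rule abs_summable_summable)
  then obtain S where S: "(T has_sum S) D1" using summable_on_def by blast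
  have inner1: "((\<lambda>n. T (q, n)) has_sum (if q = r then x ^ r / G r else 0)) {..q}" for q
  proof (rule has_sum_finiteI)
    have "(\<Sum>n\<le>q. T (q, n)) = (\<Sum>n\<le>q. real (q choose n) * real (n choose r) * (-1) ^ (q - n)) * x ^ q / G q"
      unfolding T_def by (simp add: sum_divide_distrib sum_distrib_right)
    also have "\<dots> = (if q = r then x ^ r / G r else 0)" by (simp add: alt_choose_sum)
    finally show "(if q = r then x ^ r / G r else 0) = sum (\<lambda>n. T (q, n)) {..q}" by simp
  qed simp
  have "((\<lambda>q. if q = r then x ^ r / G r else 0) has_sum S) UNIV"
    by (rule has_sum_SigmaD[OF S[unfolded D1_def]]) (rule inner1)
  moreover have "((\<lambda>q. if q = r then x ^ r / G r else 0) has_sum (x ^ r / G r)) UNIV"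
  proof -
    have "((\<lambda>q. if q = r then x ^ r / G r else 0) has_sum (sum (\<lambda>q. if q = r then x ^ r / G r else 0) {r})) {r}"
      by (rule has_sum_finite) simp
    hence "((\<lambda>q. if q = r then x ^ r / G r else 0) has_sum (x ^ r / G r)) {r}" by simp
    thus ?thesis by (rule has_sum_cong_neutral[THEN iffD1, rotated -1]) auto
  qed
  ultimately have Sval: "S = x ^ r / G r" by (rule has_sum_unique)
  have bij: "bij_betw (\<lambda>(n, q). (q, n)) D2 D1"
    unfolding D1_def D2_def by (rule bij_betwI[where g = "\<lambda>(q, n). (n, q)"]) auto
  have S2: "((\<lambda>(n, q). T (q, n)) has_sum S) D2"
    using has_sum_reindex_bij_betw[OF bij, of T S] S by (simp add: case_prod_unfold)
  have T2: "(\<lambda>(n, q). T (q, n)) summable_on D2" using S2 summable_on_def by blast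
  have inner2: "((\<lambda>q. T (q, n)) has_sum (real (n choose r) * p n)) {n..}" for n
  proof -
    have "(\<lambda>q. T (q, n)) summable_on {n..}"
      using summable_on_SigmaD1[of "\<lambda>n q. T (q, n)", OF T2[unfolded D2_def]] by simp
    then obtain I where I: "((\<lambda>q. T (q, n)) has_sum I) {n..}" using summable_on_def by blast
    have bij2: "bij_betw (\<lambda>m. m + n) UNIV {n..}"
      by (rule bij_betwI[where g = "\<lambda>q. q - n"]) auto
    have "((\<lambda>m. T (m + n, n)) has_sum I) UNIV"
      using has_sum_reindex_bij_betw[OF bij2, of "\<lambda>q. T (q, n)" I] I by simp
    hence Isum: "(\<lambda>m. T (m + n, n)) sums I" by (rule has_sum_imp_sums)
    define e where "e m = pochhammer (real n + 1) m * (- x) ^ m / (fact m * Gamma (a * real m + (real n * a + 1)))" for m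
    have Te: "T (m + n, n) = real (n choose r) * x ^ n * e m" for m
    proof -
      have pc1: "pochhammer (real n + 1) m / fact m = real ((n + m) choose n)" by (rule poch_choose)
      have pc3: "(- x) ^ m = (-1) ^ m * x ^ m" by (rule power_minus)
      have pc2: "a * real m + (real n * a + 1) = a * real (m + n) + 1" by (simp add: algebra_simps)
      have "e m = (pochhammer (real n + 1) m / fact m) * ((- x) ^ m / Gamma (a * real m + (real n * a + 1)))"
        unfolding e_def by (simp only: times_divide_times_eq)
      also have "\<dots> = real ((n + m) choose n) * (((-1) ^ m * x ^ m) / Gamma (a * real (m + n) + 1))"
        by (simp only: pc1 pc2 pc3)
      finally have e2: "e m = real ((n + m) choose n) * ((-1) ^ m * x ^ m) / Gamma (a * real (m + n) + 1)"
        by (simp only: times_divide_eq_right)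
      have "T (m + n, n) = real ((n + m) choose n) * real (n choose r) * (-1) ^ m * (x ^ n * x ^ m) / Gamma (a * real (m + n) + 1)"
        unfolding T_def G_def by (simp add: power_add ac_simps)
      also have "\<dots> = real (n choose r) * x ^ n * e m" unfolding e2 by (simp add: divide_inverse ac_simps)
      finally show ?thesis .
    qed
    show ?thesis
    proof (cases "real (n choose r) * x ^ n = 0")
      case True
      hence "T (m + n, n) = 0" for m using Te by simp
      hence "I = 0" using Isum sums_unique by (metis sums_0 sums_unique2)
      then show ?thesis using I True x by (auto simp: binomial_eq_0)
    next
      case False
      have "(\<lambda>m. T (m + n, n) / (real (n choose r) * x ^ n)) sums (I / (real (n choose r) * x ^ n))"
        by (rule sums_divide[OF Isum])
      moreover have "T (m + n, n) / (real (n choose r) * x ^ n) = e m" for m using Te False by simp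
      ultimately have "e sums (I / (real (n choose r) * x ^ n))" by simp
      hence "suminf e = I / (real (n choose r) * x ^ n)" by (rule sums_unique[symmetric])
      hence "p n = x ^ n * (I / (real (n choose r) * x ^ n))" using pdef[of n] unfolding e_def by simp
      hence "real (n choose r) * p n = I" using False x by (simp add: field_simps)
      then show ?thesis using I by simp
    qed
  qed
  have "((\<lambda>n. real (n choose r) * p n) has_sum S) UNIV"
    by (rule has_sum_SigmaD[OF S2[unfolded D2_def]]) (simp add: inner2)
  hence "(\<lambda>n. real (n choose r) * p n) sums S" by (rule has_sum_imp_sums)
  thus ?thesis using Sval unfolding G_def by simp
qed




lemma Gamma_dup_real:
  fixes a :: real assumes a: "a > 0"
  shows "Gamma a * Gamma (a + 1/2) = 2 powr (1 - 2 * a) * sqrt pi * Gamma (2 * a)"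
proof -
  have z1: "complex_of_real a \<notin> \<int>\<^sub>\<le>\<^sub>0" using a by (auto elim!: nonpos_Ints_cases simp: complex_eq_iff)
  have z2: "complex_of_real a + 1/2 \<notin> \<int>\<^sub>\<le>\<^sub>0" using a
    by (auto elim!: nonpos_Ints_cases simp: complex_eq_iff)
  have "Gamma (complex_of_real a) * Gamma (complex_of_real a + 1/2) =
             exp ((1 - 2 * complex_of_real a) * of_real (ln 2)) * of_real (sqrt pi) * Gamma (2 * complex_of_real a)"
    by (rule Gamma_legendre_duplication[OF z1 z2])
  also have "exp ((1 - 2 * complex_of_real a) * of_real (ln 2)) = of_real (exp ((1 - 2 * a) * ln 2))"
    by (simp flip: exp_of_real)
  also have "Gamma (complex_of_real a) = of_real (Gamma a)" by (rule Gamma_complex_of_real)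
  also have "complex_of_real a + 1/2 = of_real (a + 1/2)" by simp
  also have "Gamma (complex_of_real (a + 1/2)) = of_real (Gamma (a + 1/2))" by (rule Gamma_complex_of_real)
  also have "2 * complex_of_real a = of_real (2 * a)" by simp
  also have "Gamma (complex_of_real (2 * a)) = of_real (Gamma (2 * a))" by (rule Gamma_complex_of_real)
  finally have "complex_of_real (Gamma a * Gamma (a + 1/2)) = complex_of_real (exp ((1 - 2 * a) * ln 2) * sqrt pi * Gamma (2 * a))"
    by simp
  hence "Gamma a * Gamma (a + 1/2) = exp ((1 - 2 * a) * ln 2) * sqrt pi * Gamma (2 * a)"
    using of_real_eq_iff by blast
  thus ?thesis by (simp add: powr_def)
qed

lemma c_identity:
  fixes a :: real assumes a: "a > 0"
  shows "a * Beta a (1/2) / 2 powr (2 * a - 1) = 2 * Gamma (a + 1) ^ 2 / Gamma (2 * a + 1)"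
proof -
  have ga: "Gamma a > 0" using a by (rule Gamma_real_pos)
  have gh: "Gamma (a + 1/2) > 0" using a by (intro Gamma_real_pos) simp
  have g2: "Gamma (2 * a) > 0" using a by (intro Gamma_real_pos) simp
  have D: "Gamma a * Gamma (a + 1/2) = 2 powr (1 - 2 * a) * sqrt pi * Gamma (2 * a)"
    by (rule Gamma_dup_real[OF a])
  have B: "Beta a (1/2) = Gamma a * sqrt pi / Gamma (a + 1/2)"
    by (simp add: Beta_def Gamma_one_half_real)
  have Ga1: "Gamma (a + 1) = a * Gamma a" using Gamma_plus1[of a] a by (simp add: nonpos_Ints_def)
  have G21: "Gamma (2 * a + 1) = 2 * a * Gamma (2 * a)" using Gamma_plus1[of "2 * a"] a
    by (simp add: nonpos_Ints_def)
  have P: "2 powr (2 * a - 1) * 2 powr (1 - 2 * a) = 1" by (simp add: powr_add[symmetric])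
  have sp: "sqrt pi > 0" by simp
  have B2: "Beta a (1/2) = Gamma a * Gamma a / (2 powr (1 - 2 * a) * Gamma (2 * a))"
  proof -
    have "Beta a (1/2) * (2 powr (1 - 2 * a) * sqrt pi * Gamma (2 * a)) = Gamma a * sqrt pi * Gamma a"
      unfolding D[symmetric] B using gh by (simp add: field_simps)
    thus ?thesis using g2 sp by (simp add: field_simps)
  qed
  have "a * Beta a (1/2) / 2 powr (2 * a - 1) = a * Gamma a * Gamma a / ((2 powr (2 * a - 1) * 2 powr (1 - 2 * a)) * Gamma (2 * a))"
    unfolding B2 by (simp add: field_simps)
  also have "\<dots> = a * Gamma a * Gamma a / Gamma (2 * a)" unfolding P by simp
  also have "\<dots> = 2 * Gamma (a + 1) ^ 2 / Gamma (2 * a + 1)" unfolding Ga1 G21 using a g2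
    by (simp add: field_simps power2_eq_square)
  finally show ?thesis .
qed




lemma four_powr_le:
  fixes a :: real assumes "0 \<le> a" "a \<le> 1"
  shows "4 powr a \<le> 1 + 3 * a"
proof -
  have "exp ((1 - a) *\<^sub>R 0 + a *\<^sub>R ln 4) \<le> (1 - a) * exp 0 + a * exp (ln 4)"
    using assms by (intro convex_onD[OF exp_convex]) auto
  thus ?thesis by (simp add: powr_def algebra_simps)
qed

lemma Beta22: "Beta 2 2 = (1/6 :: real)"
proof -
  have "Gamma (2::real) = 1" using Gamma_fact[of 1] by simp
  moreover have "Gamma (4::real) = 6" using Gamma_fact[of 3] by (simp add: fact_numeral)
  ultimately show ?thesis by (simp add: Beta_def)
qed

lemma c_gt1:
  fixes a :: real assumes a: "0 < a" "a < 1"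
  shows "2 * Gamma (a + 1) ^ 2 / Gamma (2 * a + 1) > 1"
proof -
  have g1: "Gamma (2 * a + 1) > 0" using a by (intro Gamma_real_pos) simp
  have G22: "Gamma (2 * a + 2) = (2 * a + 1) * Gamma (2 * a + 1)"
    using Gamma_plus1[of "2 * a + 1"] a by (simp add: nonpos_Ints_def add.assoc)
  have BB: "Beta (a + 1) (a + 1) = Gamma (a + 1) ^ 2 / Gamma (2 * a + 2)"
    by (simp add: Beta_def power2_eq_square algebra_simps)
  have I1: "((\<lambda>t. t powr a * (1 - t) powr a) has_integral Beta (a + 1) (a + 1)) {0..1}"
    using has_integral_Beta_real[of "a + 1" "a + 1"] a by simp
  have I2: "((\<lambda>t. 4 powr (1 - a) * (t powr (2 - 1) * (1 - t) powr (2 - 1))) has_integral 4 powr (1 - a) * Beta 2 2) {0..1}"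
    by (intro has_integral_mult_right has_integral_Beta_real) auto
  have le: "4 powr (1 - a) * (t powr (2 - 1) * (1 - t) powr (2 - 1)) \<le> t powr a * (1 - t) powr a"
    if t: "t \<in> {0..1}" for t
  proof -
    define u where "u = 4 * (t * (1 - t))"
    have u0: "u \<ge> 0" using t by (simp add: u_def)
    have u1: "u \<le> 1"
    proof -
      have "4 * (t * (1 - t)) = 1 - (2 * t - 1)^2" by (simp add: power2_eq_square algebra_simps)
      thus ?thesis unfolding u_def by (smt (verit) zero_le_power2)
    qed
    have "t powr (2 - 1) * (1 - t) powr (2 - 1) = t * (1 - t)" using t by simp
    hence "4 powr (1 - a) * (t powr (2 - 1) * (1 - t) powr (2 - 1)) = u / 4 powr a"
      unfolding u_def by (simp add: powr_diff)
    also have "\<dots> \<le> u powr a / 4 powr a"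
      using powr_mono'[of a 1 u] a u0 u1 by (intro divide_right_mono) auto
    also have "u powr a / 4 powr a = (u / 4) powr a" using u0 by (simp add: powr_divide)
    also have "u / 4 = t * (1 - t)" unfolding u_def by simp
    also have "(t * (1 - t)) powr a = t powr a * (1 - t) powr a" using t by (intro powr_mult)
    finally show ?thesis .
  qed
  have "4 powr (1 - a) * Beta 2 2 \<le> Beta (a + 1) (a + 1)"
    by (rule has_integral_le[OF I2 I1 le])
  hence Bge: "4 powr (1 - a) / 6 \<le> Gamma (a + 1) ^ 2 / ((2 * a + 1) * Gamma (2 * a + 1))"
    unfolding Beta22 BB G22 by simp
  have "3 * 4 powr a < 4 * (2 * a + 1)" using four_powr_le[of a] a by (smt (verit))
  hence "1 < (2 * a + 1) * 4 powr (1 - a) / 3" by (simp add: powr_diff field_simps)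
  also have "(2 * a + 1) * 4 powr (1 - a) / 3 = 2 * (2 * a + 1) * (4 powr (1 - a) / 6)" by simp
  also have "\<dots> \<le> 2 * (2 * a + 1) * (Gamma (a + 1) ^ 2 / ((2 * a + 1) * Gamma (2 * a + 1)))"
    using Bge a by (intro mult_left_mono) auto
  also have "\<dots> = 2 * Gamma (a + 1) ^ 2 / Gamma (2 * a + 1)"
  proof -
    have "\<And>c G X::real. c \<noteq> 0 \<Longrightarrow> 2 * c * (X / (c * G)) = 2 * X / G" by simp
    thus ?thesis using a g1 by (metis less_irrefl add_pos_pos mult_pos_pos zero_less_numeral zero_less_one)
  qed
  finally show ?thesis .
qed




context prob_space
begin

lemma rv_of_indep:
  assumes indep: "indep_vars (\<lambda>_. count_space UNIV) (\<lambda>i. case i of None \<Rightarrow> N | Some n \<Rightarrow> X n) UNIV"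
  shows "N \<in> measurable M (count_space UNIV)" "X i \<in> measurable M (count_space UNIV)"
proof -
  from indep have "\<forall>i\<in>UNIV. random_variable (count_space UNIV) (case i of None \<Rightarrow> N | Some n \<Rightarrow> X n)"
    unfolding indep_vars_def by blast
  from this[rule_format, of None] this[rule_format, of "Some i"]
  show "N \<in> measurable M (count_space UNIV)" "X i \<in> measurable M (count_space UNIV)" by auto
qed

lemma pred_sets_cs:
  assumes Y: "Y \<in> measurable M (count_space UNIV)"
  shows "{\<omega> \<in> space M. P (Y \<omega>)} \<in> events"
proof -
  have "Y -` {m. P m} \<inter> space M \<in> events" using measurable_sets[OF Y, of "{m. P m}"] by simp
  also have "Y -` {m. P m} \<inter> space M = {\<omega> \<in> space M. P (Y \<omega>)}" by auto
  finally show ?thesis .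
qed

lemma finite_dist_expectation:
  fixes Y :: "'a \<Rightarrow> nat" and q :: "nat \<Rightarrow> real" and f :: "nat \<Rightarrow> real"
  assumes Y: "Y \<in> measurable M (count_space UNIV)"
    and d: "\<And>j. j \<in> {1..k} \<Longrightarrow> prob {\<omega> \<in> space M. Y \<omega> = j} = q j"
    and qs: "(\<Sum>j=1..k. q j) = 1"
  shows "integrable M (\<lambda>\<omega>. f (Y \<omega>))" "expectation (\<lambda>\<omega>. f (Y \<omega>)) = (\<Sum>j=1..k. f j * q j)"
proof -
  have sets: "{\<omega> \<in> space M. Y \<omega> = j} \<in> events" for j using pred_sets_cs[OF Y] .
  have setk: "{\<omega> \<in> space M. Y \<omega> \<in> {1..k}} \<in> events" using pred_sets_cs[OF Y] .
  have "prob (\<Union>j\<in>{1..k}. {\<omega> \<in> space M. Y \<omega> = j}) = (\<Sum>j\<in>{1..k}. prob {\<omega> \<in> space M. Y \<omega> = j})"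
    using sets apply (intro measure_finite_Union)
    apply (auto simp: disjoint_family_on_def)
    done
  also have "\<dots> = 1" using d qs by simp
  also have "(\<Union>j\<in>{1..k}. {\<omega> \<in> space M. Y \<omega> = j}) = {\<omega> \<in> space M. Y \<omega> \<in> {1..k}}" by auto
  finally have "prob {\<omega> \<in> space M. Y \<omega> \<in> {1..k}} = 1" .
  hence AE1: "AE \<omega> in M. \<omega> \<in> {\<omega> \<in> space M. Y \<omega> \<in> {1..k}}"
    using prob_eq_1[OF setk] by simp
  define g where "g \<omega> = (\<Sum>j\<in>{1..k}. f j * indicator {\<omega> \<in> space M. Y \<omega> = j} \<omega>)" for \<omega>
  have AE2: "AE \<omega> in M. f (Y \<omega>) = g \<omega>"
    using AE1
  proof (rule AE_mp, intro AE_I2 impI)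
    fix \<omega> assume "\<omega> \<in> space M" "\<omega> \<in> {\<omega> \<in> space M. Y \<omega> \<in> {1..k}}"
    then show "f (Y \<omega>) = g \<omega>"
      unfolding g_def indicator_def by (simp add: if_distrib[of "\<lambda>z. f _ * z"] sum.If_cases)
  qed
  have fm: "(\<lambda>\<omega>. f (Y \<omega>)) \<in> borel_measurable M" using Y by simp
  have gm: "g \<in> borel_measurable M" unfolding g_def using sets by (intro borel_measurable_sum borel_measurable_times) auto
  have ii: "integrable M (\<lambda>\<omega>. f j * indicator {\<omega> \<in> space M. Y \<omega> = j} \<omega>)" for j
    using sets[of j] by (intro integrable_mult_right integrable_real_indicator) (auto simp: emeasure_eq_measure)
  have gi: "integrable M g" unfolding g_def
    apply (rule Bochner_Integration.integrable_sum)
    using ii by simp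
  show "integrable M (\<lambda>\<omega>. f (Y \<omega>))" using integrable_cong_AE[OF fm gm AE2] gi by simp
  have "expectation (\<lambda>\<omega>. f (Y \<omega>)) = expectation g" by (rule integral_cong_AE[OF fm gm AE2])
  also have "\<dots> = (\<Sum>j\<in>{1..k}. f j * prob {\<omega> \<in> space M. Y \<omega> = j})"
    unfolding g_def using sets
    by (subst Bochner_Integration.integral_sum[OF ii]) (auto intro!: sum.cong)
  also have "\<dots> = (\<Sum>j=1..k. f j * q j)" using d by simp
  finally show "expectation (\<lambda>\<omega>. f (Y \<omega>)) = (\<Sum>j=1..k. f j * q j)" .
qed

end



context prob_space
begin

lemma indep_prod_gen:
  fixes N :: "'a \<Rightarrow> nat" and X :: "nat \<Rightarrow> 'a \<Rightarrow> nat" and Fs :: "nat option \<Rightarrow> nat \<Rightarrow> real"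
  assumes indep: "indep_vars (\<lambda>_. count_space UNIV) (\<lambda>i. case i of None \<Rightarrow> N | Some n \<Rightarrow> X n) UNIV"
    and I: "finite I"
    and int: "\<And>u. u \<in> I \<Longrightarrow> integrable M (\<lambda>\<omega>. Fs u ((case u of None \<Rightarrow> N | Some n \<Rightarrow> X n) \<omega>))"
  shows "expectation (\<lambda>\<omega>. \<Prod>u\<in>I. Fs u ((case u of None \<Rightarrow> N | Some n \<Rightarrow> X n) \<omega>))
           = (\<Prod>u\<in>I. expectation (\<lambda>\<omega>. Fs u ((case u of None \<Rightarrow> N | Some n \<Rightarrow> X n) \<omega>)))"
    and "integrable M (\<lambda>\<omega>. \<Prod>u\<in>I. Fs u ((case u of None \<Rightarrow> N | Some n \<Rightarrow> X n) \<omega>))"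
proof -
  have iv: "indep_vars (\<lambda>_. borel) (\<lambda>u \<omega>. Fs u ((case u of None \<Rightarrow> N | Some n \<Rightarrow> X n) \<omega>)) UNIV"
    by (rule indep_vars_compose2[OF indep]) simp
  have iv2: "indep_vars (\<lambda>_. borel) (\<lambda>u \<omega>. Fs u ((case u of None \<Rightarrow> N | Some n \<Rightarrow> X n) \<omega>)) I"
    by (rule indep_vars_subset[OF iv]) simp
  show "expectation (\<lambda>\<omega>. \<Prod>u\<in>I. Fs u ((case u of None \<Rightarrow> N | Some n \<Rightarrow> X n) \<omega>))
           = (\<Prod>u\<in>I. expectation (\<lambda>\<omega>. Fs u ((case u of None \<Rightarrow> N | Some n \<Rightarrow> X n) \<omega>)))"
    by (rule indep_vars_lebesgue_integral[OF I iv2 int])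
  show "integrable M (\<lambda>\<omega>. \<Prod>u\<in>I. Fs u ((case u of None \<Rightarrow> N | Some n \<Rightarrow> X n) \<omega>))"
    by (rule indep_vars_integrable[OF I iv2 int])
qed

lemma indep_prod3:
  fixes N :: "'a \<Rightarrow> nat" and X :: "nat \<Rightarrow> 'a \<Rightarrow> nat" and F G H :: "nat \<Rightarrow> real"
  assumes indep: "indep_vars (\<lambda>_. count_space UNIV) (\<lambda>i. case i of None \<Rightarrow> N | Some n \<Rightarrow> X n) UNIV"
    and il: "i \<noteq> l"
    and iF: "integrable M (\<lambda>\<omega>. F (N \<omega>))" and iG: "integrable M (\<lambda>\<omega>. G (X i \<omega>))"
    and iH: "integrable M (\<lambda>\<omega>. H (X l \<omega>))"
  shows "expectation (\<lambda>\<omega>. F (N \<omega>) * (G (X i \<omega>) * H (X l \<omega>)))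
           = expectation (\<lambda>\<omega>. F (N \<omega>)) * (expectation (\<lambda>\<omega>. G (X i \<omega>)) * expectation (\<lambda>\<omega>. H (X l \<omega>)))"
    and "integrable M (\<lambda>\<omega>. F (N \<omega>) * (G (X i \<omega>) * H (X l \<omega>)))"
proof -
  define Fs where "Fs u = (case u of None \<Rightarrow> F | Some m \<Rightarrow> if m = i then G else H)" for u
  define I where "I = {None, Some i, Some l}"
  have fin: "finite I" unfolding I_def by simp
  have int: "integrable M (\<lambda>\<omega>. Fs u ((case u of None \<Rightarrow> N | Some n \<Rightarrow> X n) \<omega>))" if "u \<in> I" for u
    using that iF iG iH il unfolding I_def Fs_def by auto
  have P: "(\<Prod>u\<in>I. Fs u ((case u of None \<Rightarrow> N | Some n \<Rightarrow> X n) \<omega>)) = F (N \<omega>) * (G (X i \<omega>) * H (X l \<omega>))" for \<omega>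
    unfolding I_def Fs_def using il by simp
  have P2: "(\<Prod>u\<in>I. expectation (\<lambda>\<omega>. Fs u ((case u of None \<Rightarrow> N | Some n \<Rightarrow> X n) \<omega>)))
     = expectation (\<lambda>\<omega>. F (N \<omega>)) * (expectation (\<lambda>\<omega>. G (X i \<omega>)) * expectation (\<lambda>\<omega>. H (X l \<omega>)))"
    unfolding I_def Fs_def using il by simp
  show "expectation (\<lambda>\<omega>. F (N \<omega>) * (G (X i \<omega>) * H (X l \<omega>)))
           = expectation (\<lambda>\<omega>. F (N \<omega>)) * (expectation (\<lambda>\<omega>. G (X i \<omega>)) * expectation (\<lambda>\<omega>. H (X l \<omega>)))"
    using indep_prod_gen(1)[OF indep fin int] unfolding P P2 .
  show "integrable M (\<lambda>\<omega>. F (N \<omega>) * (G (X i \<omega>) * H (X l \<omega>)))"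
    using indep_prod_gen(2)[OF indep fin int] unfolding P .
qed

lemma indep_prod2:
  fixes N :: "'a \<Rightarrow> nat" and X :: "nat \<Rightarrow> 'a \<Rightarrow> nat" and F G :: "nat \<Rightarrow> real"
  assumes indep: "indep_vars (\<lambda>_. count_space UNIV) (\<lambda>i. case i of None \<Rightarrow> N | Some n \<Rightarrow> X n) UNIV"
    and iF: "integrable M (\<lambda>\<omega>. F (N \<omega>))" and iG: "integrable M (\<lambda>\<omega>. G (X i \<omega>))"
  shows "expectation (\<lambda>\<omega>. F (N \<omega>) * G (X i \<omega>))
           = expectation (\<lambda>\<omega>. F (N \<omega>)) * expectation (\<lambda>\<omega>. G (X i \<omega>))"
    and "integrable M (\<lambda>\<omega>. F (N \<omega>) * G (X i \<omega>))"
proof -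
  define Fs :: "nat option \<Rightarrow> nat \<Rightarrow> real" where "Fs u = (case u of None \<Rightarrow> F | Some m \<Rightarrow> G)" for u
  define I where "I = {None, Some i}"
  have fin: "finite I" unfolding I_def by simp
  have int: "integrable M (\<lambda>\<omega>. Fs u ((case u of None \<Rightarrow> N | Some n \<Rightarrow> X n) \<omega>))" if "u \<in> I" for u
    using that iF iG unfolding I_def Fs_def by auto
  have P: "(\<Prod>u\<in>I. Fs u ((case u of None \<Rightarrow> N | Some n \<Rightarrow> X n) \<omega>)) = F (N \<omega>) * G (X i \<omega>)" for \<omega>
    unfolding I_def Fs_def by simp
  have P2: "(\<Prod>u\<in>I. expectation (\<lambda>\<omega>. Fs u ((case u of None \<Rightarrow> N | Some n \<Rightarrow> X n) \<omega>)))
     = expectation (\<lambda>\<omega>. F (N \<omega>)) * expectation (\<lambda>\<omega>. G (X i \<omega>))"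
    unfolding I_def Fs_def by simp
  show "expectation (\<lambda>\<omega>. F (N \<omega>) * G (X i \<omega>))
           = expectation (\<lambda>\<omega>. F (N \<omega>)) * expectation (\<lambda>\<omega>. G (X i \<omega>))"
    using indep_prod_gen(1)[OF indep fin int] unfolding P P2 .
  show "integrable M (\<lambda>\<omega>. F (N \<omega>) * G (X i \<omega>))"
    using indep_prod_gen(2)[OF indep fin int] unfolding P .
qed

end



context prob_space
begin

lemma compound_moments:
  fixes N :: "'a \<Rightarrow> nat" and X :: "nat \<Rightarrow> 'a \<Rightarrow> nat" and q :: "nat \<Rightarrow> real" and k :: nat
  assumes indep: "indep_vars (\<lambda>_. count_space UNIV) (\<lambda>i. case i of None \<Rightarrow> N | Some n \<Rightarrow> X n) UNIV"
    and distX: "\<And>i j. i \<ge> 1 \<Longrightarrow> j \<in> {1..k} \<Longrightarrow> prob {\<omega> \<in> space M. X i \<omega> = j} = q j"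
    and qs: "(\<Sum>j=1..k. q j) = 1"
    and EN: "(\<lambda>n. real n * prob {\<omega> \<in> space M. N \<omega> = n}) sums e1"
    and EN2: "(\<lambda>n. real n * (real n - 1) * prob {\<omega> \<in> space M. N \<omega> = n}) sums e2"
  defines "\<mu> \<equiv> (\<Sum>j=1..k. real j * q j)" and "\<nu> \<equiv> (\<Sum>j=1..k. (real j)^2 * q j)"
  shows "integrable M (\<lambda>\<omega>. (\<Sum>i=1..N \<omega>. real (X i \<omega>)))"
    and "expectation (\<lambda>\<omega>. (\<Sum>i=1..N \<omega>. real (X i \<omega>))) = e1 * \<mu>"
    and "integrable M (\<lambda>\<omega>. (\<Sum>i=1..N \<omega>. real (X i \<omega>))^2)"
    and "expectation (\<lambda>\<omega>. (\<Sum>i=1..N \<omega>. real (X i \<omega>))^2) = e1 * \<nu> + e2 * \<mu>^2"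
proof -
  define p where "p n = prob {\<omega> \<in> space M. N \<omega> = n}" for n
  define ind where "ind n m = (if m = n then 1 else 0 :: real)" for n m :: nat
  have Nm: "N \<in> measurable M (count_space UNIV)" using rv_of_indep[OF indep] by blast
  have Xm: "X i \<in> measurable M (count_space UNIV)" for i using rv_of_indep[OF indep] by blast
  have setN: "{\<omega> \<in> space M. N \<omega> = n} \<in> events" for n using pred_sets_cs[OF Nm] .
  have ind_int: "integrable M (\<lambda>\<omega>. ind n (N \<omega>))" and ind_exp: "expectation (\<lambda>\<omega>. ind n (N \<omega>)) = p n" for n
  proof -
    have eq: "\<And>\<omega>. \<omega> \<in> space M \<Longrightarrow> ind n (N \<omega>) = indicator {\<omega> \<in> space M. N \<omega> = n} \<omega>"
      unfolding ind_def by (auto simp: indicator_def)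
    have "integrable M (indicator {\<omega> \<in> space M. N \<omega> = n} :: 'a \<Rightarrow> real)"
      using setN[of n] by (intro integrable_real_indicator) (auto simp: emeasure_eq_measure)
    thus "integrable M (\<lambda>\<omega>. ind n (N \<omega>))"
      using Bochner_Integration.integrable_cong[of M M "\<lambda>\<omega>. ind n (N \<omega>)" "indicator {\<omega> \<in> space M. N \<omega> = n}"] eq by simp
    have "expectation (\<lambda>\<omega>. ind n (N \<omega>)) = expectation (indicator {\<omega> \<in> space M. N \<omega> = n})"
      by (rule Bochner_Integration.integral_cong[OF refl eq])
    also have "\<dots> = p n" unfolding p_def by (simp add: Int_absorb2 setN sets.sets_into_space)
    finally show "expectation (\<lambda>\<omega>. ind n (N \<omega>)) = p n" .
  qed
  have X1: "integrable M (\<lambda>\<omega>. real (X i \<omega>))" "expectation (\<lambda>\<omega>. real (X i \<omega>)) = \<mu>" if "i \<ge> 1" for i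
    using finite_dist_expectation[OF Xm[of i], of k q real] distX[OF that] qs unfolding \<mu>_def by auto
  have X2: "integrable M (\<lambda>\<omega>. (real (X i \<omega>))^2)" "expectation (\<lambda>\<omega>. (real (X i \<omega>))^2) = \<nu>" if "i \<ge> 1" for i
    using finite_dist_expectation[OF Xm[of i], of k q "\<lambda>j. (real j)^2"] distX[OF that] qs unfolding \<nu>_def by auto
  have E1: "integrable M (\<lambda>\<omega>. ind n (N \<omega>) * real (X i \<omega>))"
           "expectation (\<lambda>\<omega>. ind n (N \<omega>) * real (X i \<omega>)) = p n * \<mu>" if "i \<ge> 1" for n i
    using indep_prod2[OF indep ind_int[of n] X1(1)[OF that]] X1(2)[OF that] ind_exp[of n] by auto
  have E3: "integrable M (\<lambda>\<omega>. ind n (N \<omega>) * (real (X i \<omega>))^2)"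
           "expectation (\<lambda>\<omega>. ind n (N \<omega>) * (real (X i \<omega>))^2) = p n * \<nu>" if "i \<ge> 1" for n i
    using indep_prod2[OF indep ind_int[of n] X2(1)[OF that]] X2(2)[OF that] ind_exp[of n] by auto
  have E2: "integrable M (\<lambda>\<omega>. ind n (N \<omega>) * (real (X i \<omega>) * real (X l \<omega>)))"
           "expectation (\<lambda>\<omega>. ind n (N \<omega>) * (real (X i \<omega>) * real (X l \<omega>))) = p n * \<mu>^2"
    if "i \<ge> 1" "l \<ge> 1" "i \<noteq> l" for n i l
    using indep_prod3[OF indep that(3) ind_int[of n] X1(1)[OF that(1)] X1(1)[OF that(2)]]
      X1(2)[OF that(1)] X1(2)[OF that(2)] ind_exp[of n] by (auto simp: power2_eq_square)
  have E23: "integrable M (\<lambda>\<omega>. ind n (N \<omega>) * (real (X i \<omega>) * real (X l \<omega>)))"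
           "expectation (\<lambda>\<omega>. ind n (N \<omega>) * (real (X i \<omega>) * real (X l \<omega>))) = (if i = l then p n * \<nu> else p n * \<mu>^2)"
    if "i \<ge> 1" "l \<ge> 1" for n i l
    using E2[OF that] E3[OF that(1), of n] by (auto simp: power2_eq_square)
  define f where "f n \<omega> = (\<Sum>i=1..n. ind n (N \<omega>) * real (X i \<omega>))" for n \<omega>
  have f_int: "integrable M (f n)" for n
    unfolding f_def by (rule Bochner_Integration.integrable_sum) (rule E1(1); simp)
  have f_exp: "expectation (f n) = real n * p n * \<mu>" for n
    unfolding f_def by (subst Bochner_Integration.integral_sum) (auto intro: E1 simp: E1(2))
  have f_nonneg: "f n \<omega> \<ge> 0" for n \<omega> unfolding f_def ind_def by (auto intro!: sum_nonneg)
  have f_sum: "(\<Sum>n. f n \<omega>) = (\<Sum>i=1..N \<omega>. real (X i \<omega>))" for \<omega>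
  proof -
    have "(\<Sum>n. f n \<omega>) = (\<Sum>n\<in>{N \<omega>}. f n \<omega>)"
      by (rule suminf_finite) (auto simp: f_def ind_def)
    also have "\<dots> = (\<Sum>i=1..N \<omega>. real (X i \<omega>))" by (simp add: f_def ind_def)
    finally show ?thesis .
  qed
  have f_AE: "AE \<omega> in M. summable (\<lambda>n. norm (f n \<omega>))"
    by (intro AE_I2 summable_finite[of "{N _}"]) (auto simp: f_def ind_def)
  have f_nexp: "expectation (\<lambda>\<omega>. norm (f n \<omega>)) = real n * p n * \<mu>" for n
    using f_exp[of n] f_nonneg by simp
  have f_summ: "summable (\<lambda>n. expectation (\<lambda>\<omega>. norm (f n \<omega>)))"
    unfolding f_nexp using sums_mult2[OF EN, of \<mu>] unfolding p_def by (auto simp: sums_iff)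
  have f_sums: "(\<lambda>n. expectation (f n)) sums (e1 * \<mu>)"
    unfolding f_exp using sums_mult2[OF EN, of \<mu>] unfolding p_def by simp
  show "integrable M (\<lambda>\<omega>. (\<Sum>i=1..N \<omega>. real (X i \<omega>)))"
    using integrable_suminf[OF f_int f_AE f_summ] unfolding f_sum .
  show "expectation (\<lambda>\<omega>. (\<Sum>i=1..N \<omega>. real (X i \<omega>))) = e1 * \<mu>"
    using sums_integral[OF f_int f_AE f_summ] f_sums unfolding f_sum by (metis sums_unique2)
  define g where "g n \<omega> = (\<Sum>i=1..n. \<Sum>l=1..n. ind n (N \<omega>) * (real (X i \<omega>) * real (X l \<omega>)))" for n \<omega>
  have g_int: "integrable M (g n)" for n
    unfolding g_def
    by (intro Bochner_Integration.integrable_sum) (rule E23(1); simp)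
  have inner: "(\<Sum>l=1..n. (if i = l then p n * \<nu> else p n * \<mu>^2)) = p n * \<nu> + (real n - 1) * (p n * \<mu>^2)"
    if "i \<in> {1..n}" for i n
  proof -
    have "(\<Sum>l=1..n. (if i = l then p n * \<nu> else p n * \<mu>^2)) = (\<Sum>l=1..n. p n * \<mu>^2 + (if i = l then p n * \<nu> - p n * \<mu>^2 else 0))"
      by (intro sum.cong) auto
    also have "\<dots> = real n * (p n * \<mu>^2) + (p n * \<nu> - p n * \<mu>^2)"
      using that by (simp add: sum.distrib)
    finally show ?thesis by (simp add: algebra_simps)
  qed
  have g_exp: "expectation (g n) = p n * (real n * \<nu> + real n * (real n - 1) * \<mu>^2)" for n
  proof -
    have "expectation (g n) = (\<Sum>i=1..n. \<Sum>l=1..n. (if i = l then p n * \<nu> else p n * \<mu>^2))"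
      unfolding g_def
      by (subst Bochner_Integration.integral_sum, (intro Bochner_Integration.integrable_sum; rule E23(1); simp),
          intro sum.cong refl, subst Bochner_Integration.integral_sum) (auto intro: E23(1) simp: E23(2))
    also have "\<dots> = (\<Sum>i=1..n. p n * \<nu> + (real n - 1) * (p n * \<mu>^2))"
      by (intro sum.cong refl inner)
    also have "\<dots> = p n * (real n * \<nu> + real n * (real n - 1) * \<mu>^2)" by (simp add: algebra_simps)
    finally show ?thesis .
  qed
  have g_nonneg: "g n \<omega> \<ge> 0" for n \<omega> unfolding g_def ind_def by (auto intro!: sum_nonneg)
  have g_sum: "(\<Sum>n. g n \<omega>) = (\<Sum>i=1..N \<omega>. real (X i \<omega>))^2" for \<omega>
  proof -
    have "(\<Sum>n. g n \<omega>) = (\<Sum>n\<in>{N \<omega>}. g n \<omega>)"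
      by (rule suminf_finite) (auto simp: g_def ind_def)
    also have "\<dots> = (\<Sum>i=1..N \<omega>. \<Sum>l=1..N \<omega>. real (X i \<omega>) * real (X l \<omega>))" by (simp add: g_def ind_def)
    also have "\<dots> = (\<Sum>i=1..N \<omega>. real (X i \<omega>))^2" by (simp add: power2_eq_square sum_product)
    finally show ?thesis .
  qed
  have g_AE: "AE \<omega> in M. summable (\<lambda>n. norm (g n \<omega>))"
    by (intro AE_I2 summable_finite[of "{N _}"]) (auto simp: g_def ind_def)
  have g_sums: "(\<lambda>n. expectation (g n)) sums (e1 * \<nu> + e2 * \<mu>^2)"
  proof -
    have "(\<lambda>n. real n * p n * \<nu> + real n * (real n - 1) * p n * \<mu>^2) sums (e1 * \<nu> + e2 * \<mu>^2)"
      by (intro sums_add sums_mult2) (use EN EN2 in \<open>simp_all add: p_def\<close>)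
    moreover have "expectation (g n) = real n * p n * \<nu> + real n * (real n - 1) * p n * \<mu>^2" for n
      unfolding g_exp by (simp add: algebra_simps)
    ultimately show ?thesis by simp
  qed
  have g_summ: "summable (\<lambda>n. expectation (\<lambda>\<omega>. norm (g n \<omega>)))"
    using g_sums g_nonneg by (simp add: sums_iff)
  show "integrable M (\<lambda>\<omega>. (\<Sum>i=1..N \<omega>. real (X i \<omega>))^2)"
    using integrable_suminf[OF g_int g_AE g_summ] unfolding g_sum .
  show "expectation (\<lambda>\<omega>. (\<Sum>i=1..N \<omega>. real (X i \<omega>))^2) = e1 * \<nu> + e2 * \<mu>^2"
    using sums_integral[OF g_int g_AE g_summ] g_sums unfolding g_sum by (metis sums_unique2)
qed

end



lemma choose2_real: "real (n choose 2) * 2 = real n * (real n - 1)"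
proof (induction n)
  case 0 then show ?case by simp
next
  case (Suc n)
  have "Suc n choose 2 = n + (n choose 2)"
    by (simp add: numeral_2_eq_2)
  then show ?case using Suc by (simp add: algebra_simps)
qed

theorem mainTheorem10:
  fixes M :: "'a measure"
    and k :: nat
    and lam :: "nat \<Rightarrow> real \<Rightarrow> real"
    and \<alpha> t :: real
    and N :: "'a \<Rightarrow> nat"
    and X :: "nat \<Rightarrow> 'a \<Rightarrow> nat"
    and MM :: "'a \<Rightarrow> nat"
  assumes "k \<ge> 1"
    and lam_nonneg: "\<And>j s. j \<in> {1..k} \<Longrightarrow> s \<ge> 0 \<Longrightarrow> lam j s \<ge> 0"
    and lam_locint: "\<And>j T. j \<in> {1..k} \<Longrightarrow> T \<ge> 0 \<Longrightarrow> set_integrable lborel {0..T} (lam j)"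
    and alpha: "0 < \<alpha>" "\<alpha> < 1"
    and t_pos: "t > 0"
    and Lam_pos: "(\<Sum>j=1..k. Lam (lam j) t) > 0"
    and P: "prob_space M"
    and indep: "prob_space.indep_vars M (\<lambda>_. count_space UNIV)
                  (\<lambda>i. case i of None \<Rightarrow> N | Some n \<Rightarrow> X n) UNIV"
    and distN: "\<And>n. measure M {\<omega> \<in> space M. N \<omega> = n} =
                  (\<Sum>j=1..k. Lam (lam j) t) powr (real n * \<alpha>) *
                  mittag_leffler3 (real n + 1) \<alpha> (real n * \<alpha> + 1)
                    (- ((\<Sum>j=1..k. Lam (lam j) t) powr \<alpha>))"
    and distX: "\<And>i j. i \<ge> 1 \<Longrightarrow> j \<in> {1..k} \<Longrightarrow>
                  measure M {\<omega> \<in> space M. X i \<omega> = j} =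
                  Lam (lam j) t / (\<Sum>j=1..k. Lam (lam j) t)"
    and MM_def: "\<And>\<omega>. MM \<omega> = (\<Sum>i=1..N \<omega>. X i \<omega>)"
  shows "(prob_space.expectation M (\<lambda>\<omega>. real (MM \<omega>)) =
           (\<Sum>j=1..k. Lam (lam j) t) powr \<alpha> / Gamma (\<alpha> + 1) *
           ((1 / (\<Sum>j=1..k. Lam (lam j) t)) * (\<Sum>j=1..k. real j * Lam (lam j) t))) \<and>
         (prob_space.variance M (\<lambda>\<omega>. real (MM \<omega>)) =
           (\<Sum>j=1..k. Lam (lam j) t) powr \<alpha> / Gamma (\<alpha> + 1) *
           ((1 / (\<Sum>j=1..k. Lam (lam j) t)) * (\<Sum>j=1..k. (real j)^2 * Lam (lam j) t)
            + ((1 / (\<Sum>j=1..k. Lam (lam j) t)) * (\<Sum>j=1..k. real j * Lam (lam j) t))^2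
              * ((\<Sum>j=1..k. Lam (lam j) t) powr \<alpha> / Gamma (\<alpha> + 1))
              * (\<alpha> * Beta \<alpha> (1/2) / 2 powr (2 * \<alpha> - 1) - 1))) \<and>
         (prob_space.variance M (\<lambda>\<omega>. real (MM \<omega>)) >
           prob_space.expectation M (\<lambda>\<omega>. real (MM \<omega>)))"

proof -
  interpret prob_space M by (rule P)
  define L where "L = (\<Sum>j=1..k. Lam (lam j) t)"
  define x where "x = L powr \<alpha>"
  define q where "q j = Lam (lam j) t / L" for j
  define p where "p n = prob {\<omega> \<in> space M. N \<omega> = n}" for n
  have Lp: "L > 0" using Lam_pos unfolding L_def .
  have xp: "x > 0" unfolding x_def using Lp by simp
  have pdef: "p n = x ^ n * (\<Sum>m. pochhammer (real n + 1) m * (- x) ^ m /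
                   (fact m * Gamma (\<alpha> * real m + (real n * \<alpha> + 1))))" for n
  proof -
    have pw: "L powr (real n * \<alpha>) = x ^ n"
      unfolding x_def using Lp by (simp add: powr_powr[symmetric] powr_realpow mult.commute)
    have "p n = L powr (real n * \<alpha>) * mittag_leffler3 (real n + 1) \<alpha> (real n * \<alpha> + 1) (- (L powr \<alpha>))"
      using distN[of n] unfolding p_def L_def .
    also have "\<dots> = x ^ n * mittag_leffler3 (real n + 1) \<alpha> (real n * \<alpha> + 1) (- x)"
      unfolding pw x_def ..
    finally show ?thesis unfolding mittag_leffler3_def .
  qed
  have G1p: "Gamma (\<alpha> + 1) > 0" using alpha by (intro Gamma_real_pos) simp
  have G2p: "Gamma (2 * \<alpha> + 1) > 0" using alpha by (intro Gamma_real_pos) simp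
  define e1 where "e1 = x / Gamma (\<alpha> + 1)"
  define e2 where "e2 = 2 * x ^ 2 / Gamma (2 * \<alpha> + 1)"
  have EN: "(\<lambda>n. real n * prob {\<omega> \<in> space M. N \<omega> = n}) sums e1"
    using ml_moment[OF alpha xp pdef, of 1] unfolding e1_def p_def by (simp add: add.commute)
  have EN2: "(\<lambda>n. real n * (real n - 1) * prob {\<omega> \<in> space M. N \<omega> = n}) sums e2"
  proof -
    have "(\<lambda>n. 2 * (real (n choose 2) * p n)) sums (2 * (x ^ 2 / Gamma (\<alpha> * real 2 + 1)))"
      by (intro sums_mult ml_moment[OF alpha xp pdef])
    moreover have "2 * (real (n choose 2) * p n) = real n * (real n - 1) * prob {\<omega> \<in> space M. N \<omega> = n}" for n
    proof -
      have "2 * (real (n choose 2) * p n) = (real (n choose 2) * 2) * p n" by (simp only: mult_ac)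
      also have "\<dots> = real n * (real n - 1) * p n" by (simp only: choose2_real)
      finally show ?thesis unfolding p_def .
    qed
    ultimately show ?thesis unfolding e2_def by (simp add: mult.commute)
  qed
  have distX': "\<And>i j. i \<ge> 1 \<Longrightarrow> j \<in> {1..k} \<Longrightarrow> prob {\<omega> \<in> space M. X i \<omega> = j} = q j"
    using distX unfolding q_def L_def by simp
  have qs: "(\<Sum>j=1..k. q j) = 1" unfolding q_def using Lp by (simp add: sum_divide_distrib[symmetric] L_def)
  have q0: "q j \<ge> 0" if "j \<in> {1..k}" for j using distX'[of 1 j] that by (metis order_refl measure_nonneg)
  define \<mu> where "\<mu> = (\<Sum>j=1..k. real j * q j)"
  define \<nu> where "\<nu> = (\<Sum>j=1..k. (real j)^2 * q j)"
  note CM = compound_moments[OF indep distX' qs EN EN2, folded \<mu>_def \<nu>_def]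
  have MMr: "(\<lambda>\<omega>. real (MM \<omega>)) = (\<lambda>\<omega>. \<Sum>i=1..N \<omega>. real (X i \<omega>))"
    by (simp add: MM_def)
  have Eq: "expectation (\<lambda>\<omega>. real (MM \<omega>)) = e1 * \<mu>" unfolding MMr by (rule CM(2))
  have Var: "variance (\<lambda>\<omega>. real (MM \<omega>)) = e1 * \<nu> + e2 * \<mu>^2 - (e1 * \<mu>)^2"
  proof -
    have MMp: "real (MM \<omega>) = (\<Sum>i=1..N \<omega>. real (X i \<omega>))" for \<omega> by (simp add: MM_def)
    have "variance (\<lambda>\<omega>. \<Sum>i=1..N \<omega>. real (X i \<omega>)) = e1 * \<nu> + e2 * \<mu>^2 - (e1 * \<mu>)^2"
      by (subst variance_eq) (use CM in auto)
    thus ?thesis by (simp only: MMp)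
  qed
  have mu': "(1 / L) * (\<Sum>j=1..k. real j * Lam (lam j) t) = \<mu>"
    unfolding \<mu>_def q_def sum_distrib_left by (rule sum.cong) auto
  have nu': "(1 / L) * (\<Sum>j=1..k. (real j)^2 * Lam (lam j) t) = \<nu>"
    unfolding \<nu>_def q_def sum_distrib_left by (rule sum.cong) auto
  define c where "c = \<alpha> * Beta \<alpha> (1/2) / 2 powr (2 * \<alpha> - 1)"
  have c_eq: "c = 2 * Gamma (\<alpha> + 1) ^ 2 / Gamma (2 * \<alpha> + 1)" unfolding c_def using alpha by (intro c_identity) simp
  have c1: "c > 1" unfolding c_eq using c_gt1[OF alpha] .
  have e2c: "e2 = e1 ^ 2 * c" unfolding e2_def e1_def c_eq using G1p G2p by (simp add: power_divide)
  have Var2: "variance (\<lambda>\<omega>. real (MM \<omega>)) = e1 * (\<nu> + \<mu>^2 * e1 * (c - 1))"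
    unfolding Var e2c by (simp add: power2_eq_square algebra_simps)
  have mu1: "\<mu> \<ge> 1"
  proof -
    have "(\<Sum>j=1..k. q j) \<le> \<mu>" unfolding \<mu>_def
    proof (intro sum_mono)
      fix j assume j: "j \<in> {1..k}"
      have "1 * q j \<le> real j * q j" using q0[OF j] j by (intro mult_right_mono) auto
      thus "q j \<le> real j * q j" by simp
    qed
    thus ?thesis using qs by simp
  qed
  have numu: "\<nu> \<ge> \<mu>" unfolding \<mu>_def \<nu>_def
  proof (intro sum_mono mult_right_mono)
    fix j assume "j \<in> {1..k}"
    thus "real j \<le> (real j)^2" by (simp add: power2_eq_square)
    show "0 \<le> q j" using q0 \<open>j \<in> {1..k}\<close> by simp
  qed
  have e1p: "e1 > 0" unfolding e1_def using xp G1p by simp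
  have over: "e1 * \<mu> < e1 * (\<nu> + \<mu>^2 * e1 * (c - 1))"
  proof -
    have "\<mu>^2 * e1 * (c - 1) > 0" using mu1 e1p c1 by simp
    hence "\<mu> < \<nu> + \<mu>^2 * e1 * (c - 1)" using numu by linarith
    thus ?thesis using e1p by simp
  qed
  show ?thesis
    unfolding Var2 unfolding Eq L_def[symmetric] x_def[symmetric] mu' nu' c_def[symmetric] e1_def[symmetric]
    using over by (intro conjI refl)
qed


end
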